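(* Let $K\ge 2$, $\mathbf{V}\in\mathbb{C}^{n\times r}$, and let $\tilde{\mathbf{V}}\in\mathbb{R}^{B_Kn\times 2r}$ and the coordinate groups $\mathcal{G}^{(i)}$ be as in the context. If $\mathcal{I}\subset[B_Kn]$ with $|\mathcal{I}|=2r-1$ contains three or more indices from the same coordinate group $\mathcal{G}^{(i)}$, then $\mathrm{rank}(\tilde{\mathbf{V}}_{\mathcal{I},:})<2r-1$.
   Context: $B_K=K/2$ if $K$ is even and $B_K=K$ if $K$ is odd; $\rho_m=e^{-\mathrm{i}\pi(2m+1)/K}$ for $m\in\{0,\dots,B_K-1\}$. $\tilde{\mathbf{V}}$ has rows indexed by $j=i+mn$ ($i\in[n]$, $m\in\{0,\dots,B_K-1\}$), and row $j$ equals $[\mathrm{Re}(\rho_m\mathbf{V}_{i,:}),\ \mathrm{Im}(\rho_m\mathbf{V}_{i,:})]\in\mathbb{R}^{2r}$. The coordinate group $\mathcal{G}^{(i)}$ is the set of row indices $\{i,i+n,\dots,i+(B_K-1)n\}$. $\tilde{\mathbf{V}}_{\mathcal{I},:}$ is the submatrix of rows indexed by $\mathcal{I}$. *)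

theory Defs
  imports Complex_Main "Jordan_Normal_Form.DL_Rank_Submatrix"
begin

definition BK :: "nat \<Rightarrow> nat" where
  "BK K = (if even K then K div 2 else K)"

definition rho :: "nat \<Rightarrow> nat \<Rightarrow> complex" where
  "rho K m = cis (- pi * real (2 * m + 1) / real K)"

(* Vtilde: rows indexed by j = i + m*n (0-based, i < n, m < B_K),
   row j = [Re(rho_m V_{i,:}), Im(rho_m V_{i,:})] *)
definition Vtilde :: "nat \<Rightarrow> nat \<Rightarrow> nat \<Rightarrow> complex mat \<Rightarrow> real mat" where
  "Vtilde K n r V = mat (BK K * n) (2 * r)
     (\<lambda>(j, c). if c < r then Re (rho K (j div n) * V $$ (j mod n, c))
               else Im (rho K (j div n) * V $$ (j mod n, c - r)))"

definition coord_group :: "nat \<Rightarrow> nat \<Rightarrow> nat \<Rightarrow> nat set" where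
  "coord_group K n i = {i + m * n | m. m < BK K}"

end

theory Submission
  imports Defs
begin
lemma rank_lt_if_left_null:
  fixes A :: "real mat" and y :: "real vec"
  assumes A: "A \<in> carrier_mat N nc" and y: "y \<in> carrier_vec N" and k: "k < N" "y $ k \<noteq> 0"
    and orth: "\<And>c. c < nc \<Longrightarrow> y \<bullet> col A c = 0"
  shows "vec_space.rank N A < N"
proof -
  interpret vs: vec_space "TYPE(real)" N .
  obtain S where S: "maximal S (\<lambda>T. T \<subseteq> set (cols A) \<and> vs.lin_indpt T)"
    using maximal_exists[of "(\<lambda>T. T \<subseteq> set (cols A) \<and> vs.lin_indpt T)" "card (set (cols A))" "{}"]
    by (meson List.finite_set card_mono empty_iff empty_subsetI vs.finite_lin_indpt2 rev_finite_subset)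
  have r: "vs.rank A = card S" using vs.rank_card_indpt[OF A S] .
  have Ssub: "S \<subseteq> set (cols A)" and li: "vs.lin_indpt S" using S unfolding maximal_def by auto
  have colsc: "set (cols A) \<subseteq> carrier_vec N" using A cols_dim by blast
  hence Sc: "S \<subseteq> carrier_vec N" using Ssub by blast
  have le: "card S \<le> N" using vs.li_le_dim(2)[OF vs.fin_dim _ li] Sc vs.dim_is_n by simp
  have fin: "finite S" using vs.li_le_dim(1)[OF vs.fin_dim _ li] Sc by simp
  define W where "W = {x \<in> carrier_vec N. y \<bullet> x = 0}"
  have subm: "submodule class_ring W vs.V"
    apply unfold_locales
    using y by (auto simp: W_def scalar_prod_add_distrib scalar_prod_smult_distrib class_ring_simps)
  have "S \<subseteq> W"
  proof
    fix v assume "v \<in> S"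
    then have "v \<in> set (cols A)" using Ssub by auto
    then obtain c where "c < nc" "v = col A c" using A unfolding cols_def by auto
    then show "v \<in> W" using orth A unfolding W_def by auto
  qed
  then have spW: "vs.span S \<subseteq> W" using vs.span_is_subset subm by blast
  have "card S \<noteq> N"
  proof
    assume "card S = N"
    then have "vs.basis S" using vs.dim_li_is_basis[OF vs.fin_dim fin _ li] Sc vs.dim_is_n by simp
    then have "vs.span S = carrier_vec N" unfolding vs.basis_def by simp
    then have "unit_vec N k \<in> W" using spW k by auto
    then show False using k y unfolding W_def by (simp add: scalar_prod_right_unit)
  qed
  then show ?thesis using r le by simp
qed
lemma real_rel:
  fixes a1 a2 a3 b1 b2 b3 :: real
  shows "\<exists>x y z. (x \<noteq> 0 \<or> y \<noteq> 0 \<or> z \<noteq> 0) \<and> x*a1+y*a2+z*a3=0 \<and> x*b1+y*b2+z*b3=0"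
proof (cases "a2*b3-a3*b2 \<noteq> 0 \<or> a3*b1-a1*b3 \<noteq> 0 \<or> a1*b2-a2*b1 \<noteq> 0")
  case True
  show ?thesis
    apply (rule exI[of _ "a2*b3-a3*b2"], rule exI[of _ "a3*b1-a1*b3"], rule exI[of _ "a1*b2-a2*b1"])
    using True by (auto simp: algebra_simps)
next
  case False
  hence e: "a2*b3 = a3*b2" "a3*b1 = a1*b3" "a1*b2 = a2*b1" by auto
  show ?thesis
  proof (cases "a1 = 0 \<and> a2 = 0 \<and> a3 = 0")
    case True
    show ?thesis
    proof (cases "b1 = 0 \<and> b2 = 0 \<and> b3 = 0")
      case True then show ?thesis using \<open>a1 = 0 \<and> a2 = 0 \<and> a3 = 0\<close> by (intro exI[of _ 1]) auto
    next
      case False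
      then consider "b1 \<noteq> 0" | "b2 \<noteq> 0" | "b3 \<noteq> 0" by auto
      then show ?thesis
      proof cases
        case 1 then show ?thesis using True
          by (intro exI[of _ b2] exI[of _ "-b1"] exI[of _ 0]) (auto simp: algebra_simps)
      next
        case 2 then show ?thesis using True
          by (intro exI[of _ b2] exI[of _ "-b1"] exI[of _ 0]) (auto simp: algebra_simps)
      next
        case 3 then show ?thesis using True
          by (intro exI[of _ b3] exI[of _ 0] exI[of _ "-b1"]) (auto simp: algebra_simps)
      qed
    qed
  next
    case False
    then consider "a1 \<noteq> 0" | "a2 \<noteq> 0" | "a3 \<noteq> 0" by auto
    then show ?thesis
    proof cases
      case 1 then show ?thesis using e
        by (intro exI[of _ a2] exI[of _ "-a1"] exI[of _ 0]) (auto simp: algebra_simps)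
    next
      case 2 then show ?thesis using e
        by (intro exI[of _ a2] exI[of _ "-a1"] exI[of _ 0]) (auto simp: algebra_simps)
    next
      case 3 then show ?thesis using e
        by (intro exI[of _ a3] exI[of _ 0] exI[of _ "-a1"]) (auto simp: algebra_simps)
    qed
  qed
qed

lemma complex_rel:
  fixes w1 w2 w3 :: complex
  obtains x y z :: real where "x \<noteq> 0 \<or> y \<noteq> 0 \<or> z \<noteq> 0"
    "\<And>v. x * Re (w1*v) + y * Re (w2*v) + z * Re (w3*v) = 0"
    "\<And>v. x * Im (w1*v) + y * Im (w2*v) + z * Im (w3*v) = 0"
proof -
  obtain x y z where xyz: "x \<noteq> 0 \<or> y \<noteq> 0 \<or> z \<noteq> 0"
    "x*Re w1+y*Re w2+z*Re w3=0" "x*Im w1+y*Im w2+z*Im w3=0"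
    using real_rel by blast
  have "\<And>v. x * Re (w1*v) + y * Re (w2*v) + z * Re (w3*v) =
     Re v * (x*Re w1+y*Re w2+z*Re w3) - Im v * (x*Im w1+y*Im w2+z*Im w3)"
    by (simp add: algebra_simps)
  moreover have "\<And>v. x * Im (w1*v) + y * Im (w2*v) + z * Im (w3*v) =
     Im v * (x*Re w1+y*Re w2+z*Re w3) + Re v * (x*Im w1+y*Im w2+z*Im w3)"
    by (simp add: algebra_simps)
  ultimately show ?thesis using that xyz by simp
qed
lemma three_elems:
  assumes "finite A" "card A \<ge> 3"
  obtains a b c where "a \<in> A" "b \<in> A" "c \<in> A" "a \<noteq> b" "a \<noteq> c" "b \<noteq> c"
proof -
  obtain B where "B \<subseteq> A" "card B = 3" using obtain_subset_with_card_n[OF assms(2)] by blast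
  then obtain a b c where "B = {a,b,c}" "a \<noteq> b" "a \<noteq> c" "b \<noteq> c" by (auto simp: card_3_iff)
  then show ?thesis using that \<open>B \<subseteq> A\<close> by auto
qed

theorem lemma8:
  fixes K n r :: nat and V :: "complex mat" and I :: "nat set"
  assumes "K \<ge> 2"
    and "V \<in> carrier_mat n r"
    and IR: "I \<subseteq> {0..<BK K * n}"
    and "card I = 2 * r - 1"
    and "\<exists>i<n. card (I \<inter> coord_group K n i) \<ge> 3"
  shows "vec_space.rank (card I) (submatrix (Vtilde K n r V) I UNIV) < 2 * r - 1"
proof -
  define Vt where "Vt = Vtilde K n r V"
  define A where "A = submatrix Vt I UNIV"
  define N where "N = card I"
  have finI: "finite I" using IR finite_subset by blast
  have dimVt: "dim_row Vt = BK K * n" "dim_col Vt = 2 * r" unfolding Vt_def Vtilde_def by auto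
  have rowset: "{i. i < dim_row Vt \<and> i \<in> I} = I" using IR dimVt by auto
  have colset: "{j. j < dim_col Vt \<and> j \<in> UNIV} = {..<2*r}" using dimVt by auto
  have Acar: "A \<in> carrier_mat N (2*r)" unfolding A_def carrier_mat_def N_def
    using dim_submatrix[of Vt I UNIV] rowset colset dimVt by simp
  define p where "p a = card {x\<in>I. x < a}" for a
  have p_lt: "p a < N" if "a \<in> I" for a
  proof -
    have "{x\<in>I. x < a} \<subset> I" using that by auto
    then show ?thesis unfolding p_def N_def using finI psubset_card_mono by blast
  qed
  have p_inj: "p a = p b \<Longrightarrow> a \<in> I \<Longrightarrow> b \<in> I \<Longrightarrow> a = b" for a b
    unfolding p_def by (metis pick_card_in_set)
  have Aent: "A $$ (p a, cc) = Vt $$ (a, cc)" if "a \<in> I" "cc < 2*r" for a cc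
  proof -
    have "{x \<in> UNIV. x < cc} = {..<cc}" by auto
    then have "card {x \<in> UNIV. x < cc} = cc" by simp
    then show ?thesis using submatrix_index_card[of a Vt cc I UNIV] that IR dimVt
      unfolding A_def p_def by auto
  qed
  obtain i where i: "i < n" "card (I \<inter> coord_group K n i) \<ge> 3" using assms(5) by blast
  obtain a b c where abc: "a \<in> I \<inter> coord_group K n i" "b \<in> I \<inter> coord_group K n i" "c \<in> I \<inter> coord_group K n i"
     "a \<noteq> b" "a \<noteq> c" "b \<noteq> c"
    using three_elems[OF _ i(2)] finI by blast
  have grp: "x div n < BK K \<and> x mod n = i" if "x \<in> coord_group K n i" for x
    using that i(1) unfolding coord_group_def by auto
  have Vent: "Vt $$ (x, cc) = (if cc < r then Re (rho K (x div n) * V $$ (i, cc))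
        else Im (rho K (x div n) * V $$ (i, cc - r)))"
    if "x \<in> I \<inter> coord_group K n i" "cc < 2*r" for x cc
    using that grp[of x] IR unfolding Vt_def Vtilde_def by auto
  obtain x y z :: real where xyz: "x \<noteq> 0 \<or> y \<noteq> 0 \<or> z \<noteq> 0"
    "\<And>v. x * Re (rho K (a div n)*v) + y * Re (rho K (b div n)*v) + z * Re (rho K (c div n)*v) = 0"
    "\<And>v. x * Im (rho K (a div n)*v) + y * Im (rho K (b div n)*v) + z * Im (rho K (c div n)*v) = 0"
    using complex_rel by metis
  have pa: "p a < N" "p b < N" "p c < N" using abc p_lt by auto
  have pd: "p a \<noteq> p b" "p a \<noteq> p c" "p b \<noteq> p c" using abc p_inj by blast+
  define yv where "yv = vec N (\<lambda>k. if k = p a then x else if k = p b then y else if k = p c then z else 0)"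
  have yv: "yv \<in> carrier_vec N" unfolding yv_def by simp
  obtain k where k: "k < N" "yv $ k \<noteq> 0"
    using xyz(1) pa pd unfolding yv_def by auto
  have orth: "yv \<bullet> col A cc = 0" if cc: "cc < 2*r" for cc
  proof -
    define f where "f k = yv $ k * col A cc $ k" for k
    have "yv \<bullet> col A cc = (\<Sum>k\<in>{0..<N}. f k)"
      unfolding scalar_prod_def f_def using Acar by simp
    also have "\<dots> = (\<Sum>k\<in>{p a, p b, p c}. f k)"
      by (rule sum.mono_neutral_right) (use pa in \<open>auto simp: f_def yv_def\<close>)
    also have "\<dots> = f (p a) + f (p b) + f (p c)" using pd by simp
    also have "\<dots> = x * A $$ (p a, cc) + y * A $$ (p b, cc) + z * A $$ (p c, cc)"
      unfolding f_def yv_def using pa pd Acar cc by auto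
    also have "\<dots> = 0"
      using Aent[of a cc] Aent[of b cc] Aent[of c cc] Vent[of a cc] Vent[of b cc] Vent[of c cc]
        abc cc xyz(2,3) by auto
    finally show ?thesis .
  qed
  have "vec_space.rank N A < N"
    by (rule rank_lt_if_left_null[OF Acar yv k]) (use orth in auto)
  then show ?thesis unfolding N_def A_def Vt_def using assms(4) by simp
qed
end
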